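(* Let $\mathbb{G}$ be a Carnot group with a strongly homogeneous norm $\|\cdot\|$ and let $K:\mathbb{G}\setminus\{\mathbf0\}\to\mathbb{R}^d$ be continuous. (1) If $K$ is dilation antisymmetric, then $K$ satisfies the annular boundedness condition. (2) If $\|\cdot\|$ is symmetric and $K$ is antisymmetric, then $K$ satisfies the annular boundedness condition.
   Context: $\mathbb{G}$: connected simply connected nilpotent Lie group with stratified Lie algebra $\mathfrak v_1\oplus\cdots\oplus\mathfrak v_s$, identified with $\mathbb{R}^N$ via exponential coordinates; $\delta_t$ acts by $t^i$ on $\mathfrak v_i$ ($t\in\mathbb{R}$). Strongly homogeneous norm: continuous, $\|\delta_tp\|=|t|\|p\|$ for $t\in\mathbb{R}$, $\|p\|=0$ iff $p=\mathbf0$; symmetric means $\|p^{-1}\|=\|p\|$; $B(0,r)=\{\|p\|<r\}$. $K$ is antisymmetric if $K(p^{-1})=-K(p)$, dilation antisymmetric if $K(\delta_{-1}p)=-K(p)$, for all $p\ne\mathbf0$. Let $\pi:\mathbb{G}\to\mathfrak v_1\cong\mathbb{R}^m$ be the projection; a vertical hyperplane is a codimension-1 subgroup $\pi^{-1}(X)$ with $X$ an $(m-1)$-dimensional linear subspace of $\mathbb{R}^m$. $K$ satisfies the annular boundedness condition if (componentwise) for every $\|\cdot\|$-radial $C^\infty$ $\psi:\mathbb{G}\to\mathbb{R}$ with $\chi_{B(0,1/2)}\le\psi\le\chi_{B(0,2)}$ there is $A_\psi\ge1$ with $\left|\int_{\mathbb{W}}(\psi^R-\psi^r)K\,d\mathcal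 L^{N-1}\right|\le A_\psi$ for all $0<r<R<\infty$ and all vertical hyperplanes $\mathbb{W}$, where $\psi^r(p)=\psi(\delta_rp)$ and $\mathcal L^{N-1}$ is Lebesgue measure on $\mathbb{W}$. *)

theory Defs
  imports "HOL-Analysis.Analysis"
begin

text \<open>The Carnot group is modelled in exponential coordinates as real^'n, with a basis
adapted to the stratification: coordinate i lies in layer deg i.\<close>

definition layer :: "('n::finite \<Rightarrow> nat) \<Rightarrow> nat \<Rightarrow> (real^'n) set" where
  "layer deg j = {x. \<forall>i. deg i \<noteq> j \<longrightarrow> x $ i = 0}"

definition dil :: "('n::finite \<Rightarrow> nat) \<Rightarrow> real \<Rightarrow> real^'n \<Rightarrow> real^'n" where
  "dil deg t p = (\<chi> i. t ^ deg i * p $ i)"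

text \<open>Stratified Lie algebra structure (bracket br) with step s, and a group law gmul on
real^'n given in exponential coordinates: lines through 0 are one-parameter subgroups and
the second order term of the product is half the bracket.\<close>

definition carnot_group ::
  "('n::finite \<Rightarrow> nat) \<Rightarrow> (real^'n \<Rightarrow> real^'n \<Rightarrow> real^'n) \<Rightarrow> (real^'n \<Rightarrow> real^'n \<Rightarrow> real^'n) \<Rightarrow> bool" where
  "carnot_group deg br gmul \<longleftrightarrow>
     (\<exists>s::nat. 1 \<le> s \<and> (\<forall>i. 1 \<le> deg i \<and> deg i \<le> s) \<and> (\<forall>j\<in>{1..s}. \<exists>i. deg i = j) \<and>
        (\<forall>j\<in>{1..s}. span {br x y | x y. x \<in> layer deg 1 \<and> y \<in> layer deg j} = layer deg (Suc j))) \<and>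
     bilinear br \<and> (\<forall>x y. br x y = - br y x) \<and>
     (\<forall>x y z. br x (br y z) + br y (br z x) + br z (br x y) = 0) \<and>
     continuous_on UNIV (\<lambda>(x, y). gmul x y) \<and>
     (\<forall>x y z. gmul (gmul x y) z = gmul x (gmul y z)) \<and>
     (\<forall>x. gmul 0 x = x \<and> gmul x 0 = x) \<and>
     (\<forall>x. \<exists>y. gmul x y = 0 \<and> gmul y x = 0) \<and>
     (\<forall>x s t. gmul (s *\<^sub>R x) (t *\<^sub>R x) = (s + t) *\<^sub>R x) \<and>
     (\<forall>x y. ((\<lambda>t. (gmul (t *\<^sub>R x) (t *\<^sub>R y) - t *\<^sub>R (x + y) - (t^2 / 2) *\<^sub>R br x y) /\<^sub>R t^2)
              \<longlongrightarrow> 0) (at 0))"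

definition ginv :: "(real^'n::finite \<Rightarrow> real^'n \<Rightarrow> real^'n) \<Rightarrow> real^'n \<Rightarrow> real^'n" where
  "ginv gmul p = (THE q. gmul p q = 0 \<and> gmul q p = 0)"

definition strongly_homogeneous_norm :: "('n::finite \<Rightarrow> nat) \<Rightarrow> (real^'n \<Rightarrow> real) \<Rightarrow> bool" where
  "strongly_homogeneous_norm deg nrm \<longleftrightarrow> continuous_on UNIV nrm \<and>
     (\<forall>t p. nrm (dil deg t p) = \<bar>t\<bar> * nrm p) \<and> (\<forall>p. nrm p = 0 \<longleftrightarrow> p = 0)"

definition symmetric_norm :: "(real^'n::finite \<Rightarrow> real^'n \<Rightarrow> real^'n) \<Rightarrow> (real^'n \<Rightarrow> real) \<Rightarrow> bool" where
  "symmetric_norm gmul nrm \<longleftrightarrow> (\<forall>p. nrm (ginv gmul p) = nrm p)"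

definition nball :: "(real^'n::finite \<Rightarrow> real) \<Rightarrow> real \<Rightarrow> (real^'n) set" where
  "nball nrm r = {p. nrm p < r}"

definition antisymmetric_kernel ::
  "(real^'n::finite \<Rightarrow> real^'n \<Rightarrow> real^'n) \<Rightarrow> (real^'n \<Rightarrow> real^'d::finite) \<Rightarrow> bool" where
  "antisymmetric_kernel gmul K \<longleftrightarrow> (\<forall>p. p \<noteq> 0 \<longrightarrow> K (ginv gmul p) = - K p)"

definition dilation_antisymmetric ::
  "('n::finite \<Rightarrow> nat) \<Rightarrow> (real^'n \<Rightarrow> real^'d::finite) \<Rightarrow> bool" where
  "dilation_antisymmetric deg K \<longleftrightarrow> (\<forall>p. p \<noteq> 0 \<longrightarrow> K (dil deg (-1) p) = - K p)"

fun iter_partial :: "'n::finite list \<Rightarrow> (real^'n \<Rightarrow> real) \<Rightarrow> real^'n \<Rightarrow> real" where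
  "iter_partial [] f = f"
| "iter_partial (i # is) f = (\<lambda>x. deriv (\<lambda>t. iter_partial is f (x + t *\<^sub>R axis i 1)) 0)"

definition smooth_fun :: "(real^'n::finite \<Rightarrow> real) \<Rightarrow> bool" where
  "smooth_fun f \<longleftrightarrow> (\<forall>is x i. continuous_on UNIV (iter_partial is f) \<and>
       (\<lambda>t. iter_partial is f (x + t *\<^sub>R axis i 1)) differentiable (at 0))"

definition radial :: "(real^'n::finite \<Rightarrow> real) \<Rightarrow> (real^'n \<Rightarrow> real) \<Rightarrow> bool" where
  "radial nrm \<psi> \<longleftrightarrow> (\<forall>p q. nrm p = nrm q \<longrightarrow> \<psi> p = \<psi> q)"

definition proj1 :: "('n::finite \<Rightarrow> nat) \<Rightarrow> real^'n \<Rightarrow> real^'n" where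
  "proj1 deg p = (\<chi> i. if deg i = 1 then p $ i else 0)"

definition vertical_hyperplane :: "('n::finite \<Rightarrow> nat) \<Rightarrow> (real^'n) set \<Rightarrow> bool" where
  "vertical_hyperplane deg W \<longleftrightarrow> (\<exists>X. subspace X \<and> X \<subseteq> layer deg 1 \<and>
       dim X + 1 = dim (layer deg 1) \<and> W = {p. proj1 deg p \<in> X})"

text \<open>(N-1)-dimensional Lebesgue measure on a hyperplane W (through 0) of real^'n, as a measure on
real^'n concentrated on W: the measure of A \<subseteq> W is the N-dimensional volume of the prism
A + [0,1] a, a a unit normal of W.\<close>

definition hyperplane_measure :: "(real^'n::finite) set \<Rightarrow> (real^'n) measure" where
  "hyperplane_measure W =
     (let a = (SOME a. norm a = 1 \<and> (\<forall>x. x \<in> W \<longleftrightarrow> a \<bullet> x = 0)) in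
      distr (restrict_space lborel {x. 0 \<le> a \<bullet> x \<and> a \<bullet> x \<le> 1}) lborel (\<lambda>x. x - (a \<bullet> x) *\<^sub>R a))"

definition annular_bounded ::
  "('n::finite \<Rightarrow> nat) \<Rightarrow> (real^'n \<Rightarrow> real) \<Rightarrow> (real^'n \<Rightarrow> real^'d::finite) \<Rightarrow> bool" where
  "annular_bounded deg nrm K \<longleftrightarrow>
     (\<forall>\<psi>. smooth_fun \<psi> \<and> radial nrm \<psi> \<and>
        (\<forall>p. indicator (nball nrm (1/2)) p \<le> \<psi> p \<and> \<psi> p \<le> indicator (nball nrm 2) p) \<longrightarrow>
      (\<exists>A\<ge>1. \<forall>r R W. 0 < r \<and> r < R \<and> vertical_hyperplane deg W \<longrightarrow>
         (\<forall>k. \<bar>\<integral>p. (\<psi> (dil deg R p) - \<psi> (dil deg r p)) * K p $ k \<partial>hyperplane_measure W\<bar> \<le> A)))"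

end

theory Submission
  imports Defs
begin

lemma lborel_diag_affine:
  fixes s :: "'n::finite \<Rightarrow> real" and a :: "real^'n"
  assumes s: "\<And>i. \<bar>s i\<bar> = 1"
  shows "distr lborel borel (\<lambda>x. a + (\<chi> i. s i * x $ i)) = lborel"
proof -
  define c where "c j = (\<Sum>i\<in>UNIV. if j = axis i 1 then s i else 0)" for j :: "real^'n"
  have c: "c (axis i 1) = s i" for i
    unfolding c_def by (simp add: axis_eq_axis)
  have eq: "(\<lambda>x. a + (\<chi> i. s i * x $ i)) = (\<lambda>x. a + (\<Sum>j\<in>Basis. (c j * (x \<bullet> j)) *\<^sub>R j))"
  proof
    fix x :: "real^'n"
    have "(\<Sum>j\<in>Basis. (c j * (x \<bullet> j)) *\<^sub>R j) = (\<chi> i. s i * x $ i)"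
    proof (rule euclidean_eqI)
      fix b :: "real^'n" assume b: "b \<in> Basis"
      then obtain k where bk: "b = axis k 1" unfolding Basis_vec_def by auto
      have "(\<Sum>j\<in>Basis. (c j * (x \<bullet> j)) *\<^sub>R j) \<bullet> b = (c b * (x \<bullet> b))"
        using b by (simp add: inner_sum_left inner_Basis if_distrib cong: if_cong)
      then show "(\<Sum>j\<in>Basis. (c j * (x \<bullet> j)) *\<^sub>R j) \<bullet> b = (\<chi> i. s i * x $ i) \<bullet> b"
        by (simp add: bk c inner_axis)
    qed
    then show "a + (\<chi> i. s i * x $ i) = a + (\<Sum>j\<in>Basis. (c j * (x \<bullet> j)) *\<^sub>R j)" by simp
  qed
  have cb: "\<And>j. j \<in> Basis \<Longrightarrow> \<bar>c j\<bar> = 1"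
    using s c unfolding Basis_vec_def by auto
  have cnz: "\<And>j. j \<in> Basis \<Longrightarrow> c j \<noteq> 0" using cb by force
  have "lborel = density (distr lborel borel (\<lambda>x. a + (\<Sum>j\<in>Basis. (c j * (x \<bullet> j)) *\<^sub>R j))) (\<lambda>_. (\<Prod>j\<in>Basis. \<bar>c j\<bar>))"
    by (rule lborel_affine_euclidean[OF cnz])
  also have "(\<Prod>j\<in>Basis. \<bar>c j\<bar>) = 1" using cb by simp
  finally show ?thesis unfolding eq by (simp add: density_1)
qed

lemma key_integral_zero:
  fixes s :: "'n::finite \<Rightarrow> real" and a :: "real^'n" and g :: "real^'n \<Rightarrow> real"
  assumes s: "\<And>i. \<bar>s i\<bar> = 1"
    and na: "norm a = 1"
    and Ta: "\<And>i. s i * a $ i = - a $ i"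
    and gm: "g \<in> borel_measurable borel"
    and godd: "\<And>x. g (\<chi> i. s i * x $ i) = - g x"
  shows "integral\<^sup>L (distr (restrict_space lborel {x. 0 \<le> a \<bullet> x \<and> a \<bullet> x \<le> 1}) lborel
            (\<lambda>x. x - (a \<bullet> x) *\<^sub>R a)) g = 0"
proof -
  define S where "S = {x::real^'n. 0 \<le> a \<bullet> x \<and> a \<bullet> x \<le> 1}"
  define P where "P = (\<lambda>x::real^'n. x - (a \<bullet> x) *\<^sub>R a)"
  define T where "T = (\<lambda>x::real^'n. (\<chi> i. s i * x $ i))"
  define \<Phi> where "\<Phi> = (\<lambda>x::real^'n. a + T x)"
  have aa: "a \<bullet> a = 1" using na by (simp add: dot_square_norm)
  have aT: "a \<bullet> T x = - (a \<bullet> x)" for x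
  proof -
    have "a \<bullet> T x = (\<Sum>i\<in>UNIV. a $ i * (s i * x $ i))" by (simp add: T_def inner_vec_def)
    also have "\<dots> = (\<Sum>i\<in>UNIV. (s i * a $ i) * x $ i)" by (simp add: algebra_simps)
    also have "\<dots> = - (\<Sum>i\<in>UNIV. a $ i * x $ i)" by (simp add: Ta sum_negf)
    finally show ?thesis by (simp add: inner_vec_def)
  qed
  have TP: "T (P x) = P (\<Phi> x)" for x
  proof -
    have "a \<bullet> \<Phi> x = 1 - a \<bullet> x" by (simp add: \<Phi>_def inner_add_right aa aT)
    have Ta': "s i * (a $ i * c) = - (a $ i * c)" for i c
      using Ta[of i] by (metis mult.assoc mult_minus_left)
    show ?thesis
      by (simp add: vec_eq_iff T_def P_def \<Phi>_def aa aT[unfolded T_def] Ta' algebra_simps)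
  qed
  have SP: "\<Phi> x \<in> S \<longleftrightarrow> x \<in> S" for x
    by (auto simp: S_def \<Phi>_def inner_add_right aa aT)
  have Sm: "S \<in> sets lborel" unfolding S_def by measurable
  have Pm: "P \<in> borel_measurable borel" unfolding P_def by measurable
  have Tm: "T \<in> borel_measurable borel" 
    unfolding T_def by (intro borel_measurable_continuous_onI continuous_intros)
  have Phim: "\<Phi> \<in> borel_measurable borel" unfolding \<Phi>_def using Tm by measurable
  have PmR: "P \<in> measurable (restrict_space lborel S) lborel"
    by (rule measurable_restrict_space1) (use Pm in simp)
  have gmL: "g \<in> borel_measurable lborel" using gm by simp
  have gTmL: "(\<lambda>x. g (T x)) \<in> borel_measurable lborel" using gm Tm by measurable
  have e1: "integral\<^sup>L (distr (restrict_space lborel S) lborel P) g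
      = integral\<^sup>L (restrict_space lborel S) (\<lambda>x. g (P x))"
    by (rule integral_distr[OF PmR gmL])
  have e2: "integral\<^sup>L (distr (restrict_space lborel S) lborel P) (\<lambda>x. g (T x))
      = integral\<^sup>L (restrict_space lborel S) (\<lambda>x. g (T (P x)))"
    by (rule integral_distr[OF PmR gTmL])
  have e3: "integral\<^sup>L (distr (restrict_space lborel S) lborel P) (\<lambda>x. g (T x))
      = - integral\<^sup>L (distr (restrict_space lborel S) lborel P) g"
    using godd by (simp add: T_def)
  define k where "k = (\<lambda>y. indicator S y *\<^sub>R g (P y))"
  have km: "k \<in> borel_measurable borel" unfolding k_def using gm Pm Sm by measurable
  have "integral\<^sup>L (restrict_space lborel S) (\<lambda>x. g (T (P x)))
      = integral\<^sup>L lborel (\<lambda>x. indicator S x *\<^sub>R g (T (P x)))"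
    using Sm by (simp add: integral_restrict_space)
  also have "\<dots> = integral\<^sup>L lborel (\<lambda>x. k (\<Phi> x))"
    by (rule Bochner_Integration.integral_cong) (auto simp: k_def TP indicator_def SP)
  also have "\<dots> = integral\<^sup>L (distr lborel borel \<Phi>) k"
    by (rule integral_distr[symmetric]) (use Phim km in auto)
  also have "distr lborel borel \<Phi> = lborel"
    unfolding \<Phi>_def T_def by (rule lborel_diag_affine[OF s])
  also have "integral\<^sup>L lborel k = integral\<^sup>L (restrict_space lborel S) (\<lambda>x. g (P x))"
    using Sm by (simp add: integral_restrict_space k_def)
  finally have "integral\<^sup>L (restrict_space lborel S) (\<lambda>x. g (T (P x))) = integral\<^sup>L (restrict_space lborel S) (\<lambda>x. g (P x))" .
  with e1 e2 e3 show ?thesis unfolding S_def[symmetric] P_def[symmetric] by simp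
qed

lemma subspace_layer: "subspace (layer deg j)"
  unfolding subspace_def layer_def by auto

lemma inner_layer1_proj1:
  assumes "a \<in> layer deg 1"
  shows "a \<bullet> proj1 deg x = a \<bullet> x"
proof -
  have "a $ i * (if deg i = 1 then x $ i else 0) = a $ i * x $ i" for i
    using assms by (auto simp: layer_def)
  then show ?thesis unfolding inner_vec_def proj1_def by (intro sum.cong) auto
qed

lemma proj1_in_layer: "proj1 deg x \<in> layer deg 1"
  by (simp add: proj1_def layer_def)

lemma vh_normal:
  assumes "vertical_hyperplane deg W"
  shows "\<exists>a. norm a = 1 \<and> (\<forall>x. x \<in> W \<longleftrightarrow> a \<bullet> x = 0)"
proof -
  obtain X where X: "subspace X" "X \<subseteq> layer deg 1" "dim X + 1 = dim (layer deg 1)"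
    and W: "W = {p. proj1 deg p \<in> X}"
    using assms unfolding vertical_hyperplane_def by blast
  let ?L = "layer deg 1"
  have sL: "span ?L = ?L" by (simp add: subspace_layer)
  have sX: "span X = X" using X(1) by simp
  have "span X \<subset> span ?L"
  proof
    show "span X \<subseteq> span ?L" using X(2) by (simp add: span_mono)
    show "span X \<noteq> span ?L"
    proof
      assume "span X = span ?L"
      then have "dim X = dim ?L" by (metis dim_span)
      with X(3) show False by simp
    qed
  qed
  then obtain b where b: "b \<noteq> 0" "b \<in> span ?L" "\<And>y. y \<in> span X \<Longrightarrow> orthogonal b y"
    by (metis orthogonal_to_subspace_exists_gen)
  define a where "a = b /\<^sub>R norm b"
  have na: "norm a = 1" using b(1) by (simp add: a_def)
  have bL: "b \<in> ?L" using b(2) sL by metis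
  have aL: "a \<in> ?L" unfolding a_def using subspace_scale[OF subspace_layer bL] by blast
  have aX: "a \<bullet> y = 0" if "y \<in> X" for y
    using b(3)[of y] that sX by (simp add: a_def orthogonal_def)
  have aa: "a \<bullet> a = 1" using na by (simp add: dot_square_norm)
  have anX: "a \<notin> span X" proof
    assume "a \<in> span X" then have "a \<bullet> a = 0" using aX[of a] sX by simp
    with aa show False by simp
  qed
  have dY: "dim (insert a X) = dim ?L" using anX X(3) by (simp add: dim_insert)
  have YL: "span (insert a X) = ?L"
  proof (rule subspace_dim_equal)
    show "subspace (span (insert a X))" by simp
    show "subspace ?L" by (rule subspace_layer)
    have "span (insert a X) \<subseteq> span ?L" by (rule span_mono) (use aL X(2) in auto)
    then show "span (insert a X) \<subseteq> ?L" using sL by (metis)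
    show "dim ?L \<le> dim (span (insert a X))" using dY by simp
  qed
  have "x \<in> W \<longleftrightarrow> a \<bullet> x = 0" for x
  proof
    assume "x \<in> W"
    then have "proj1 deg x \<in> X" using W by simp
    then show "a \<bullet> x = 0" using aX inner_layer1_proj1[OF aL, of x] by simp
  next
    assume ax: "a \<bullet> x = 0"
    have "proj1 deg x \<in> span (insert a X)" using YL proj1_in_layer[of deg x] by simp
    then obtain k where k: "proj1 deg x - k *\<^sub>R a \<in> span X" using span_breakdown_eq[of "proj1 deg x" a X] by blast
    then have "a \<bullet> (proj1 deg x - k *\<^sub>R a) = 0" using aX sX by simp
    then have "k = 0" using ax inner_layer1_proj1[OF aL, of x] aa by (simp add: inner_diff_right)
    then show "x \<in> W" using k sX W by simp
  qed
  with na show ?thesis by blast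
qed

lemma ginv_neg:
  assumes "carnot_group deg br gmul"
  shows "ginv gmul p = - p"
proof -
  have id: "\<And>x. gmul 0 x = x \<and> gmul x 0 = x"
    and as: "\<And>x y z. gmul (gmul x y) z = gmul x (gmul y z)"
    and ln: "\<And>x s t. gmul (s *\<^sub>R x) (t *\<^sub>R x) = (s + t) *\<^sub>R x"
    using assms unfolding carnot_group_def by blast+
  have i1: "gmul p (- p) = 0" using ln[of 1 p "-1"] by simp
  have i2: "gmul (- p) p = 0" using ln[of "-1" p 1] by simp
  show ?thesis unfolding ginv_def
  proof (rule the_equality)
    show "gmul p (- p) = 0 \<and> gmul (- p) p = 0" using i1 i2 by simp
    fix q assume q: "gmul p q = 0 \<and> gmul q p = 0"
    have "q = gmul (gmul (- p) p) q" using i2 id by simp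
    also have "\<dots> = gmul (- p) (gmul p q)" by (rule as)
    also have "\<dots> = - p" using q id by simp
    finally show "q = - p" .
  qed
qed

lemma dil_diag_comm: "dil deg R (\<chi> i. s i * x $ i) = (\<chi> i. s i * dil deg R x $ i)"
  by (simp add: dil_def vec_eq_iff algebra_simps)

lemma dil_zero: "dil deg R 0 = 0"
  by (simp add: dil_def vec_eq_iff)

lemma main_gen:
  fixes s :: "'n::finite \<Rightarrow> real" and K :: "real^'n \<Rightarrow> real^'d::finite"
  assumes s: "\<And>i. \<bar>s i\<bar> = 1"
    and s1: "\<And>i. deg i = 1 \<Longrightarrow> s i = -1"
    and nT: "\<And>p. nrm (\<chi> i. s i * p $ i) = nrm p"
    and KT: "\<And>p. p \<noteq> 0 \<Longrightarrow> K (\<chi> i. s i * p $ i) = - K p"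
    and Kc: "continuous_on (UNIV - {0}) K"
  shows "annular_bounded deg nrm K"
  unfolding annular_bounded_def
proof (intro allI impI)
  fix \<psi> :: "real^'n \<Rightarrow> real"
  assume h: "smooth_fun \<psi> \<and> radial nrm \<psi> \<and>
        (\<forall>p. indicator (nball nrm (1/2)) p \<le> \<psi> p \<and> \<psi> p \<le> indicator (nball nrm 2) p)"
  have \<psi>c: "continuous_on UNIV \<psi>" using h unfolding smooth_fun_def
    by (metis iter_partial.simps(1))
  have \<psi>r: "\<And>p q. nrm p = nrm q \<Longrightarrow> \<psi> p = \<psi> q" using h unfolding radial_def by blast
  have \<psi>m: "\<psi> \<in> borel_measurable borel" using \<psi>c by (rule borel_measurable_continuous_onI)
  have dm: "dil deg t \<in> borel_measurable borel" for t
    unfolding dil_def by (intro borel_measurable_continuous_onI continuous_intros)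
  have Km: "K \<in> borel_measurable borel"
    by (rule borel_measurable_continuous_countable_exceptions[of "{0}"]) 
       (use Kc in \<open>auto simp: Compl_eq_Diff_UNIV\<close>)
  have Kkm: "(\<lambda>p. K p $ k) \<in> borel_measurable borel" for k
  proof -
    have "(\<lambda>x::real^'d. x $ k) \<in> borel_measurable borel"
      by (intro borel_measurable_continuous_onI continuous_intros)
    then show ?thesis using Km by (rule measurable_compose[rotated])
  qed
  show "\<exists>A\<ge>1. \<forall>r R W. 0 < r \<and> r < R \<and> vertical_hyperplane deg W \<longrightarrow>
         (\<forall>k. \<bar>\<integral>p. (\<psi> (dil deg R p) - \<psi> (dil deg r p)) * K p $ k \<partial>hyperplane_measure W\<bar> \<le> A)"
  proof (intro exI[of _ 1] conjI allI impI)
    fix r R :: real and W :: "(real^'n) set" and k :: 'd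
    assume "0 < r \<and> r < R \<and> vertical_hyperplane deg W"
    then have vh: "vertical_hyperplane deg W" by blast
    define a where "a = (SOME a. norm a = 1 \<and> (\<forall>x. x \<in> W \<longleftrightarrow> a \<bullet> x = 0))"
    have a: "norm a = 1 \<and> (\<forall>x. x \<in> W \<longleftrightarrow> a \<bullet> x = 0)"
      unfolding a_def using vh_normal[OF vh] by (rule someI_ex)
    have a0: "a $ i = 0" if "deg i \<noteq> 1" for i
    proof -
      obtain X where X: "subspace X" and W: "W = {p. proj1 deg p \<in> X}"
        using vh unfolding vertical_hyperplane_def by blast
      have "proj1 deg (axis i 1) = 0" using that by (simp add: proj1_def vec_eq_iff axis_def)
      then have "axis i 1 \<in> W" using W X by (simp add: subspace_0)
      then have "a \<bullet> axis i 1 = 0" using a by blast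
      then show ?thesis by (simp add: inner_axis)
    qed
    have Ta: "s i * a $ i = - a $ i" for i
      using a0[of i] s1[of i] by (cases "deg i = 1") auto
    define g where "g = (\<lambda>p. (\<psi> (dil deg R p) - \<psi> (dil deg r p)) * K p $ k)"
    have gm: "g \<in> borel_measurable borel"
      unfolding g_def using \<psi>m dm Kkm by measurable
    have godd: "g (\<chi> i. s i * x $ i) = - g x" for x
    proof (cases "x = 0")
      case True
      have "(\<chi> i. s i * x $ i) = 0" using True by (simp add: vec_eq_iff)
      then show ?thesis using True by (simp add: g_def dil_zero)
    next
      case False
      have "\<psi> (dil deg t (\<chi> i. s i * x $ i)) = \<psi> (dil deg t x)" for t
        by (rule \<psi>r) (simp add: dil_diag_comm nT)
      then show ?thesis using KT[OF False] by (simp add: g_def)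
    qed
    have hm: "hyperplane_measure W = distr (restrict_space lborel {x. 0 \<le> a \<bullet> x \<and> a \<bullet> x \<le> 1}) lborel
            (\<lambda>x. x - (a \<bullet> x) *\<^sub>R a)"
      unfolding hyperplane_measure_def a_def Let_def ..
    have "(\<integral>p. g p \<partial>hyperplane_measure W) = 0"
      unfolding hm by (rule key_integral_zero[OF s]) (use a Ta gm godd in auto)
    then show "\<bar>\<integral>p. (\<psi> (dil deg R p) - \<psi> (dil deg r p)) * K p $ k \<partial>hyperplane_measure W\<bar> \<le> 1"
      by (simp add: g_def)
  qed simp
qed

theorem lemma2p9:
  fixes deg :: "'n::finite \<Rightarrow> nat"
    and br gmul :: "real^'n \<Rightarrow> real^'n \<Rightarrow> real^'n"
    and nrm :: "real^'n \<Rightarrow> real"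
    and K :: "real^'n \<Rightarrow> real^'d::finite"
  assumes "carnot_group deg br gmul"
    and "strongly_homogeneous_norm deg nrm"
    and "continuous_on (UNIV - {0}) K"
  shows "(dilation_antisymmetric deg K \<longrightarrow> annular_bounded deg nrm K) \<and>
         (symmetric_norm gmul nrm \<and> antisymmetric_kernel gmul K \<longrightarrow> annular_bounded deg nrm K)"
proof (intro conjI impI)
  have hom: "\<And>t p. nrm (dil deg t p) = \<bar>t\<bar> * nrm p"
    using assms(2) unfolding strongly_homogeneous_norm_def by blast
  have Td: "(\<chi> i. (-1) ^ deg i * p $ i) = dil deg (-1) p" for p by (simp add: dil_def)
  assume "dilation_antisymmetric deg K"
  then have KT: "\<And>p. p \<noteq> 0 \<Longrightarrow> K (dil deg (-1) p) = - K p"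
    unfolding dilation_antisymmetric_def by blast
  show "annular_bounded deg nrm K"
    by (rule main_gen[where s = "\<lambda>i. (-1) ^ deg i"]) (use KT hom assms(3) in \<open>auto simp: Td\<close>)
next
  assume h: "symmetric_norm gmul nrm \<and> antisymmetric_kernel gmul K"
  have Tn: "(\<chi> i. - p $ i) = - p" for p :: "real^'n" by (simp add: vec_eq_iff)
  have nT: "nrm (- p) = nrm p" for p
    using h ginv_neg[OF assms(1)] unfolding symmetric_norm_def by metis
  have KT: "p \<noteq> 0 \<Longrightarrow> K (- p) = - K p" for p
    using h ginv_neg[OF assms(1)] unfolding antisymmetric_kernel_def by metis
  show "annular_bounded deg nrm K"
    by (rule main_gen[where s = "\<lambda>i. -1"]) (use KT nT assms(3) in \<open>auto simp: Tn\<close>)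
qed

end
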